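(* Let $g:\mathbb{R}^r\to\mathbb{R}^{\ell}$ and $m:\mathcal{A}\to\mathbb{R}^{\ell}$ (with $\mathcal{A}\subset\mathbb{R}^s$) be given vector-valued functions, let $\{P_1(\cdot|\theta):\theta\in\Theta\}$, $\Theta\subset\mathbb{R}^d$, be a parametric family of probability measures on $(\mathbb{R}^r,\mathcal{B}(\mathbb{R}^r))$, and for $\alpha\in\mathcal{A}$ let $$\mathcal{M}_\alpha=\Big\{Q \text{ finite signed measure on } \mathbb{R}^r:\ \int dQ=1,\ \int g\,dQ=m(\alpha)\Big\}.$$ Let $P_T$ be a given mixture distribution of the form $P_T=\lambda^*P_1(\cdot|\theta^* )+(1-\lambda^* )P_0^*$ with $\lambda^*\in(0,1)$, $\theta^*\in\Theta$, $P_0^*\in\mathcal{M}_{\alpha^*}$, $\alpha^*\in\mathcal{A}$. Put $m^*=\int g(x)\,dP_T(x)$ and $m_1(\theta)=\int g(x)\,dP_1(x|\theta)$. Suppose that the system of equations $$\frac{1}{1-\lambda}m^*-\frac{\lambda}{1-\lambda}m_1(\theta)=m(\alpha)$$ in the unknowns $(\lambda,\theta,\alpha)\in(0,1)\times\Theta\times\mathcal{A}$ has a unique solution $(\lambda^*,\theta^*,\alpha^* )$. Then whenever $$P_T=\lambda P_1(\cdot|\theta)+(1-\lambda)P_0=\tilde\lambda P_1(\cdot|\tilde\theta)+(1-\tilde\lambda)\tilde P_0$$ with $\lambda,\tilde\lambda\in(0,1)$, $\theta,\tilde\theta\in\Theta$, $P_0\in\mathcal{M}_\alpha$, $\tilde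 P_0\in\mathcal{M}_{\tilde\alpha}$, $\alpha,\tilde\alpha\in\mathcal A$, we have $\lambda=\tilde\lambda$, $\theta=\tilde\theta$ and $P_0=\tilde P_0$; i.e. the semiparametric mixture model is identifiable at $P_T$.
   Context: A two-component semiparametric mixture model subject to linear constraints is a probability measure of the form $P(\cdot|\phi)=\lambda P_1(\cdot|\theta)+(1-\lambda)P_0$ with $\phi=(\lambda,\theta,\alpha)$, $\lambda\in(0,1)$, $\theta\in\Theta$, and $P_0\in\mathcal{M}_\alpha$. It is called identifiable if any two such representations of the same measure have equal $\lambda$, equal $\theta$ and equal $P_0$. *)

theory Defs
  imports "HOL-Probability.Probability"
begin

text \<open>A finite signed measure on the Borel sets is represented by its set function
  Q :: 'a set \<Rightarrow> real (value 0 outside the Borel sets).\<close>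

definition signed_decomp :: "('a::topological_space set \<Rightarrow> real) \<Rightarrow> 'a measure \<Rightarrow> 'a measure \<Rightarrow> bool" where
  "signed_decomp Q \<mu> \<nu> \<longleftrightarrow> finite_measure \<mu> \<and> finite_measure \<nu> \<and>
     sets \<mu> = sets borel \<and> sets \<nu> = sets borel \<and> Q = (\<lambda>A. measure \<mu> A - measure \<nu> A)"

definition finite_signed_measure :: "('a::topological_space set \<Rightarrow> real) \<Rightarrow> bool" where
  "finite_signed_measure Q \<longleftrightarrow> (\<exists>\<mu> \<nu>. signed_decomp Q \<mu> \<nu>)"

text \<open>g is integrable w.r.t. the signed measure Q (i.e. w.r.t. |Q|): equivalently, for some
  Jordan-type decomposition Q = mu - nu, g is integrable w.r.t. mu and nu.\<close>
definition signed_integrable :: "('a::topological_space set \<Rightarrow> real) \<Rightarrow> ('a \<Rightarrow> 'b::{banach,second_countable_topology}) \<Rightarrow> bool" where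
  "signed_integrable Q g \<longleftrightarrow> (\<exists>\<mu> \<nu>. signed_decomp Q \<mu> \<nu> \<and> integrable \<mu> g \<and> integrable \<nu> g)"

definition signed_integral :: "('a::topological_space set \<Rightarrow> real) \<Rightarrow> ('a \<Rightarrow> 'b::{banach,second_countable_topology}) \<Rightarrow> 'b" where
  "signed_integral Q g = (THE v. \<exists>\<mu> \<nu>. signed_decomp Q \<mu> \<nu> \<and> integrable \<mu> g \<and> integrable \<nu> g
                                  \<and> v = integral\<^sup>L \<mu> g - integral\<^sup>L \<nu> g)"

definition Mset :: "('a::topological_space \<Rightarrow> 'b::{banach,second_countable_topology}) \<Rightarrow> ('c \<Rightarrow> 'b) \<Rightarrow> 'c \<Rightarrow> ('a set \<Rightarrow> real) set" where
  "Mset g m \<alpha> = {Q. finite_signed_measure Q \<and> signed_integrable Q g \<and> Q UNIV = 1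
                     \<and> signed_integral Q g = m \<alpha>}"

definition mixture :: "real \<Rightarrow> 'a measure \<Rightarrow> ('a set \<Rightarrow> real) \<Rightarrow> ('a set \<Rightarrow> real)" where
  "mixture l P Q = (\<lambda>A. l * measure P A + (1 - l) * Q A)"

end

theory Submission imports Defs begin

definition add_measure :: "'a measure \<Rightarrow> 'a measure \<Rightarrow> 'a measure" where
  "add_measure M N = measure_of (space M) (sets M) (\<lambda>A. emeasure M A + emeasure N A)"

lemma sets_add_measure[simp, measurable_cong]: "sets (add_measure M N) = sets M"
  unfolding add_measure_def by (simp add: sets.sigma_sets_eq)

lemma space_add_measure[simp]: "space (add_measure M N) = space M"
  unfolding add_measure_def by (simp add: space_measure_of_conv)

lemma emeasure_add_measure[simp]:
  assumes "sets N = sets M" "A \<in> sets M"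
  shows "emeasure (add_measure M N) A = emeasure M A + emeasure N A"
  unfolding add_measure_def
proof (rule emeasure_measure_of_sigma)
  show "sigma_algebra (space M) (sets M)" by (rule sets.sigma_algebra_axioms)
  show "positive (sets M) (\<lambda>A. emeasure M A + emeasure N A)"
    by (simp add: positive_def)
  show "countably_additive (sets M) (\<lambda>A. emeasure M A + emeasure N A)"
    unfolding countably_additive_def
  proof (intro allI impI)
    fix F :: "nat \<Rightarrow> 'a set"
    assume F: "range F \<subseteq> sets M" "disjoint_family F" "\<Union> (range F) \<in> sets M"
    have "(\<Sum>i. emeasure M (F i) + emeasure N (F i)) = (\<Sum>i. emeasure M (F i)) + (\<Sum>i. emeasure N (F i))"
      by (rule suminf_add[symmetric]) auto
    also have "\<dots> = emeasure M (\<Union> (range F)) + emeasure N (\<Union> (range F))"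
      using F assms(1) by (simp add: suminf_emeasure)
    finally show "(\<Sum>i. emeasure M (F i) + emeasure N (F i)) = emeasure M (\<Union> (range F)) + emeasure N (\<Union> (range F))" .
  qed
qed fact

lemma nn_integral_add_measure:
  assumes N: "sets N = sets M" and f: "f \<in> borel_measurable M"
  shows "nn_integral (add_measure M N) f = nn_integral M f + nn_integral N f"
  using f
proof (induct rule: borel_measurable_induct)
  case (cong f g)
  have "nn_integral (add_measure M N) f = nn_integral (add_measure M N) g"
    using cong by (intro nn_integral_cong) auto
  moreover have "nn_integral M f = nn_integral M g" using cong by (intro nn_integral_cong) auto
  moreover have "nn_integral N f = nn_integral N g" using cong N sets_eq_imp_space_eq[OF N]
    by (intro nn_integral_cong) auto
  ultimately show ?case using cong by simp
next
  case (set A)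
  then show ?case using N by simp
next
  case (mult u c)
  then show ?case using N
    by (simp add: nn_integral_cmult distrib_left measurable_cong_sets[OF N refl])
next
  case (add u v)
  then show ?case using N
    by (simp add: nn_integral_add measurable_cong_sets[OF N refl] measurable_cong_sets[OF sets_add_measure refl])
next
  case (seq U)
  have mU: "\<And>i. U i \<in> borel_measurable N" using seq N by (simp add: measurable_cong_sets[OF N refl])
  have "nn_integral (add_measure M N) (SUP i. U i) = (SUP i. nn_integral (add_measure M N) (U i))"
    unfolding SUP_apply using seq by (intro nn_integral_monotone_convergence_SUP) (auto simp: measurable_cong_sets[OF sets_add_measure refl])
  also have "\<dots> = (SUP i. nn_integral M (U i) + nn_integral N (U i))" using seq by simp
  also have "\<dots> = (SUP i. nn_integral M (U i)) + (SUP i. nn_integral N (U i))"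
    using seq mU by (intro ennreal_SUP_add) (auto simp: incseq_def le_fun_def intro!: nn_integral_mono)
  also have "\<dots> = nn_integral M (SUP i. U i) + nn_integral N (SUP i. U i)"
    unfolding SUP_apply using seq mU by (simp add: nn_integral_monotone_convergence_SUP)
  finally show ?case .
qed


lemma integrable_add_measure_iff:
  fixes f :: "'a \<Rightarrow> 'b::{banach, second_countable_topology}"
  assumes N: "sets N = sets M"
  shows "integrable (add_measure M N) f \<longleftrightarrow> integrable M f \<and> integrable N f"
proof -
  have m: "f \<in> borel_measurable (add_measure M N) \<longleftrightarrow> f \<in> borel_measurable M"
          "f \<in> borel_measurable N \<longleftrightarrow> f \<in> borel_measurable M"
    by (simp only: measurable_cong_sets[OF sets_add_measure refl, of M N borel]
      measurable_cong_sets[OF N refl, of borel])+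
  show ?thesis
  proof (cases "f \<in> borel_measurable M")
    case False
    then show ?thesis using m borel_measurable_integrable by metis
  next
    case True
    have mn: "(\<lambda>x. ennreal (norm (f x))) \<in> borel_measurable M" using True by measurable
    have "(\<integral>\<^sup>+x. norm (f x) \<partial>add_measure M N) = (\<integral>\<^sup>+x. norm (f x) \<partial>M) + (\<integral>\<^sup>+x. norm (f x) \<partial>N)"
      by (rule nn_integral_add_measure[OF N mn])
    then show ?thesis unfolding integrable_iff_bounded m using True
      by simp
  qed
qed

lemma integral_add_measure:
  fixes f :: "'a \<Rightarrow> 'b::{banach, second_countable_topology}"
  assumes N: "sets N = sets M" and f: "integrable (add_measure M N) f"
  shows "integral\<^sup>L (add_measure M N) f = integral\<^sup>L M f + integral\<^sup>L N f"
  using f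
proof (induct rule: integrable_induct)
  case (base A c)
  then have A: "A \<in> sets M" "emeasure M A < \<infinity>" "emeasure N A < \<infinity>"
    using N by auto
  then have "measure (add_measure M N) A = measure M A + measure N A"
    using N unfolding measure_def by (simp add: enn2real_plus)
  moreover have I: "integral\<^sup>L K (\<lambda>x. indicator A x *\<^sub>R c) = measure K A *\<^sub>R c"
    if "A \<in> sets K" "emeasure K A < \<infinity>" for K
    using that by (simp add: sets.Int_space_eq2)
  ultimately show ?case using A N
    by (simp add: I scaleR_add_left)
next
  case (add f g)
  then have "integrable M f" "integrable N f" "integrable M g" "integrable N g"
    using integrable_add_measure_iff[OF N] by auto
  with add show ?case by (simp add: algebra_simps)
next
  case (lim f s)
  have iM: "integrable M f" "integrable N f" "\<And>i. integrable M (s i)" "\<And>i. integrable N (s i)"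
    using integrable_add_measure_iff[OF N, THEN iffD1, OF lim(5)]
      integrable_add_measure_iff[OF N, THEN iffD1, OF lim(1)] by auto
  have spN: "space N = space M" using sets_eq_imp_space_eq[OF N] .
  have DC: "(\<lambda>i. integral\<^sup>L K (s i)) \<longlonglongrightarrow> integral\<^sup>L K f"
    if K: "space K = space M" "integrable K f" "\<And>i. integrable K (s i)" for K
  proof (rule integral_dominated_convergence[where w="\<lambda>x. 2 * norm (f x)"])
    show "f \<in> borel_measurable K" using K(2) by (rule borel_measurable_integrable)
    show "s i \<in> borel_measurable K" for i using K(3) by (rule borel_measurable_integrable)
    show "integrable K (\<lambda>x. 2 * norm (f x))" using K(2) by (intro integrable_mult_right integrable_norm)
    show "AE x in K. (\<lambda>i. s i x) \<longlonglongrightarrow> f x" using lim(3) K(1) by (intro AE_I2) simp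
    show "AE x in K. norm (s i x) \<le> 2 * norm (f x)" for i using lim(4) K(1) by (intro AE_I2) simp
  qed
  have "(\<lambda>i. integral\<^sup>L M (s i)) \<longlonglongrightarrow> integral\<^sup>L M f" using iM by (intro DC) simp_all
  moreover have "(\<lambda>i. integral\<^sup>L N (s i)) \<longlonglongrightarrow> integral\<^sup>L N f" using iM spN by (intro DC) simp_all
  moreover have t3: "(\<lambda>i. integral\<^sup>L (add_measure M N) (s i)) \<longlonglongrightarrow> integral\<^sup>L (add_measure M N) f"
    using lim(1,5) by (intro DC) simp_all
  moreover have t4: "(\<lambda>i. integral\<^sup>L (add_measure M N) (s i)) \<longlonglongrightarrow> integral\<^sup>L M f + integral\<^sup>L N f"
    unfolding lim(2) by (intro tendsto_add) fact+
  ultimately show ?case using LIMSEQ_unique[OF t3 t4] by simp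
qed


lemma density_scale:
  fixes g :: "'a \<Rightarrow> 'b::{banach, second_countable_topology}"
  assumes M: "finite_measure M" and c: "0 \<le> c" and g: "integrable M g"
  shows "finite_measure (density M (\<lambda>_. ennreal c))"
    and "measure (density M (\<lambda>_. ennreal c)) A = c * measure M A"
    and "integrable (density M (\<lambda>_. ennreal c)) g"
    and "integral\<^sup>L (density M (\<lambda>_. ennreal c)) g = c *\<^sub>R integral\<^sup>L M g"
proof -
  interpret finite_measure M by fact
  show "finite_measure (density M (\<lambda>_. ennreal c))"
    by (rule finite_measureI) (simp add: emeasure_density_const ennreal_mult_eq_top_iff)
  show "measure (density M (\<lambda>_. ennreal c)) A = c * measure M A"
  proof (cases "A \<in> sets M")
    case True
    then show ?thesis using c by (simp add: measure_density_const)
  next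
    case False
    then show ?thesis by (simp add: measure_notin_sets)
  qed
  have gm: "g \<in> borel_measurable M" using g by (rule borel_measurable_integrable)
  have "integrable (density M (\<lambda>x. ennreal ((\<lambda>_. c) x))) g \<longleftrightarrow> integrable M (\<lambda>x. c *\<^sub>R g x)"
    using c by (intro integrable_density gm) auto
  then show "integrable (density M (\<lambda>_. ennreal c)) g" using g by simp
  have "integral\<^sup>L (density M (\<lambda>x. ennreal ((\<lambda>_. c) x))) g = integral\<^sup>L M (\<lambda>x. c *\<^sub>R g x)"
    using c by (intro integral_density gm) auto
  then show "integral\<^sup>L (density M (\<lambda>_. ennreal c)) g = c *\<^sub>R integral\<^sup>L M g" by simp
qed

lemma add_measure_finite:
  assumes "finite_measure M" "finite_measure N" "sets N = sets M"
  shows "finite_measure (add_measure M N)"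
    and "measure (add_measure M N) A = measure M A + measure N A"
proof -
  interpret M: finite_measure M by fact
  interpret N: finite_measure N by fact
  have sp: "space N = space M" using sets_eq_imp_space_eq[OF assms(3)] .
  have e: "emeasure (add_measure M N) B = ennreal (measure M B + measure N B)" if B: "B \<in> sets M" for B
  proof -
    have "emeasure (add_measure M N) B = emeasure M B + emeasure N B"
      by (rule emeasure_add_measure[OF assms(3) B])
    also have "\<dots> = ennreal (measure M B) + ennreal (measure N B)"
      by (simp only: M.emeasure_eq_measure N.emeasure_eq_measure)
    also have "\<dots> = ennreal (measure M B + measure N B)"
      by (rule ennreal_plus[symmetric]) simp_all
    finally show ?thesis .
  qed
  have "emeasure (add_measure M N) (space (add_measure M N)) = ennreal (measure M (space M) + measure N (space M))"
    unfolding space_add_measure by (rule e[OF sets.top])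
  then show "finite_measure (add_measure M N)"
    by (intro finite_measureI) simp
  show "measure (add_measure M N) A = measure M A + measure N A"
  proof (cases "A \<in> sets M")
    case True
    have "measure (add_measure M N) A = enn2real (ennreal (measure M A + measure N A))"
      unfolding measure_def e[OF True] ..
    then show ?thesis by (simp only: enn2real_ennreal[OF add_nonneg_nonneg[OF measure_nonneg measure_nonneg]])
  next
    case False
    then have "A \<notin> sets N" "A \<notin> sets (add_measure M N)" using assms(3) by simp_all
    then show ?thesis using False by (simp add: measure_notin_sets)
  qed
qed

lemma signed_integral_unique:
  fixes g :: "'a::topological_space \<Rightarrow> 'b::{banach, second_countable_topology}"
  assumes d1: "signed_decomp Q \<mu> \<nu>" "integrable \<mu> g" "integrable \<nu> g"
    and d2: "signed_decomp Q \<mu>' \<nu>'" "integrable \<mu>' g" "integrable \<nu>' g"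
  shows "integral\<^sup>L \<mu> g - integral\<^sup>L \<nu> g = integral\<^sup>L \<mu>' g - integral\<^sup>L \<nu>' g"
proof -
  have f1: "finite_measure \<mu>" "finite_measure \<nu>" "sets \<mu> = sets borel" "sets \<nu> = sets borel"
    and q1: "Q = (\<lambda>A. measure \<mu> A - measure \<nu> A)"
    using d1(1) unfolding signed_decomp_def by blast+
  have f2: "finite_measure \<mu>'" "finite_measure \<nu>'" "sets \<mu>' = sets borel" "sets \<nu>' = sets borel"
    and q2: "Q = (\<lambda>A. measure \<mu>' A - measure \<nu>' A)"
    using d2(1) unfolding signed_decomp_def by blast+
  have s1: "sets \<nu>' = sets \<mu>" by (simp only: f1(3) f2(4))
  have s2: "sets \<nu> = sets \<mu>'" by (simp only: f1(4) f2(3))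
  have eqm: "measure \<mu> A + measure \<nu>' A = measure \<mu>' A + measure \<nu> A" for A
  proof -
    have "measure \<mu> A - measure \<nu> A = measure \<mu>' A - measure \<nu>' A"
      using fun_cong[OF trans[OF sym[OF q1] q2], of A] by simp
    then show ?thesis by simp
  qed
  have fa1: "finite_measure (add_measure \<mu> \<nu>')" by (rule add_measure_finite(1)[OF f1(1) f2(2) s1])
  have fa2: "finite_measure (add_measure \<mu>' \<nu>)" by (rule add_measure_finite(1)[OF f2(1) f1(2) s2])
  have eq: "add_measure \<mu> \<nu>' = add_measure \<mu>' \<nu>"
  proof (rule measure_eqI)
    show "sets (add_measure \<mu> \<nu>') = sets (add_measure \<mu>' \<nu>)"
      unfolding sets_add_measure by (simp only: f1(3) f2(3))
    fix A assume A: "A \<in> sets (add_measure \<mu> \<nu>')"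
    have "emeasure (add_measure \<mu> \<nu>') A = ennreal (measure (add_measure \<mu> \<nu>') A)"
      by (rule finite_measure.emeasure_eq_measure[OF fa1])
    also have "measure (add_measure \<mu> \<nu>') A = measure (add_measure \<mu>' \<nu>) A"
      unfolding add_measure_finite(2)[OF f1(1) f2(2) s1] add_measure_finite(2)[OF f2(1) f1(2) s2]
      by (rule eqm)
    also have "ennreal (measure (add_measure \<mu>' \<nu>) A) = emeasure (add_measure \<mu>' \<nu>) A"
      by (rule finite_measure.emeasure_eq_measure[OF fa2, symmetric])
    finally show "emeasure (add_measure \<mu> \<nu>') A = emeasure (add_measure \<mu>' \<nu>) A" .
  qed
  have i1: "integrable (add_measure \<mu> \<nu>') g"
    using integrable_add_measure_iff[OF s1, of g] d1(2) d2(3) by blast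
  have i2: "integrable (add_measure \<mu>' \<nu>) g"
    using integrable_add_measure_iff[OF s2, of g] d2(2) d1(3) by blast
  have "integral\<^sup>L \<mu> g + integral\<^sup>L \<nu>' g = integral\<^sup>L \<mu>' g + integral\<^sup>L \<nu> g"
    using integral_add_measure[OF s1 i1] integral_add_measure[OF s2 i2] eq by simp
  then show ?thesis by (simp add: algebra_simps)
qed

lemma signed_integral_eq:
  fixes g :: "'a::topological_space \<Rightarrow> 'b::{banach, second_countable_topology}"
  assumes d1: "signed_decomp Q \<mu> \<nu>" "integrable \<mu> g" "integrable \<nu> g"
  shows "signed_integral Q g = integral\<^sup>L \<mu> g - integral\<^sup>L \<nu> g"
  unfolding signed_integral_def
proof (rule the_equality)
  show "\<exists>\<mu>' \<nu>'. signed_decomp Q \<mu>' \<nu>' \<and> integrable \<mu>' g \<and> integrable \<nu>' g \<and>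
      integral\<^sup>L \<mu> g - integral\<^sup>L \<nu> g = integral\<^sup>L \<mu>' g - integral\<^sup>L \<nu>' g"
    using assms by blast
  fix v assume "\<exists>\<mu>' \<nu>'. signed_decomp Q \<mu>' \<nu>' \<and> integrable \<mu>' g \<and> integrable \<nu>' g \<and>
      v = integral\<^sup>L \<mu>' g - integral\<^sup>L \<nu>' g"
  then obtain \<mu>' \<nu>' where "signed_decomp Q \<mu>' \<nu>'" "integrable \<mu>' g" "integrable \<nu>' g"
      "v = integral\<^sup>L \<mu>' g - integral\<^sup>L \<nu>' g" by blast
  then show "v = integral\<^sup>L \<mu> g - integral\<^sup>L \<nu> g"
    using signed_integral_unique[OF assms] by simp
qed

lemma mixture_signed_integral:
  fixes g :: "'a::topological_space \<Rightarrow> 'b::{banach, second_countable_topology}"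
  assumes P: "prob_space P" "sets P = sets borel" "integrable P g"
    and l: "0 < l" "l < 1" and Q: "Q \<in> Mset g m a"
  shows "signed_integral (mixture l P Q) g = l *\<^sub>R integral\<^sup>L P g + (1 - l) *\<^sub>R m a"
proof -
  from Q obtain \<mu> \<nu> where d: "signed_decomp Q \<mu> \<nu>" "integrable \<mu> g" "integrable \<nu> g"
    and si: "signed_integral Q g = m a"
    unfolding Mset_def signed_integrable_def by blast
  have ma: "m a = integral\<^sup>L \<mu> g - integral\<^sup>L \<nu> g"
    using si signed_integral_eq[OF d] by simp
  have f: "finite_measure \<mu>" "finite_measure \<nu>" "sets \<mu> = sets borel" "sets \<nu> = sets borel"
    and q: "Q = (\<lambda>A. measure \<mu> A - measure \<nu> A)"
    using d(1) unfolding signed_decomp_def by blast+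
  have fP: "finite_measure P" using P(1) unfolding prob_space_def by blast
  define A where "A = density P (\<lambda>_. ennreal l)"
  define B where "B = density \<mu> (\<lambda>_. ennreal (1 - l))"
  define C where "C = density \<nu> (\<lambda>_. ennreal (1 - l))"
  define S where "S = add_measure A B"
  have l0: "0 \<le> l" "0 \<le> 1 - l" using l by simp_all
  note dA = density_scale[OF fP l0(1) P(3), folded A_def]
  note dB = density_scale[OF f(1) l0(2) d(2), folded B_def]
  note dC = density_scale[OF f(2) l0(2) d(3), folded C_def]
  have sA: "sets A = sets borel" unfolding A_def using P(2) by simp
  have sB: "sets B = sets A" unfolding B_def using sA f(3) by simp
  have sC: "sets C = sets borel" unfolding C_def using f(4) by simp
  have fS: "finite_measure S" unfolding S_def by (rule add_measure_finite(1)[OF dA(1) dB(1) sB])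
  have mS: "measure S X = l * measure P X + (1 - l) * measure \<mu> X" for X
    unfolding S_def add_measure_finite(2)[OF dA(1) dB(1) sB] dA(2) dB(2) ..
  have sS: "sets S = sets borel" unfolding S_def using sA by simp
  have dec: "signed_decomp (mixture l P Q) S C"
    unfolding signed_decomp_def
  proof (intro conjI fS dC(1) sS sC ext)
    fix X
    show "mixture l P Q X = measure S X - measure C X"
      unfolding mixture_def mS dC(2) q by (simp add: algebra_simps)
  qed
  have iS: "integrable S g" unfolding S_def using integrable_add_measure_iff[OF sB] dA(3) dB(3) by blast
  have "signed_integral (mixture l P Q) g = integral\<^sup>L S g - integral\<^sup>L C g"
    by (rule signed_integral_eq[OF dec iS dC(3)])
  also have "integral\<^sup>L S g = l *\<^sub>R integral\<^sup>L P g + (1 - l) *\<^sub>R integral\<^sup>L \<mu> g"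
    unfolding S_def integral_add_measure[OF sB iS[unfolded S_def]] dA(4) dB(4) ..
  finally show ?thesis unfolding ma dC(4) by (simp add: algebra_simps)
qed

lemma alg_identity:
  fixes X Y :: "'b::real_vector"
  assumes "l \<noteq> 1"
  shows "(1 / (1 - l)) *\<^sub>R (l *\<^sub>R X + (1 - l) *\<^sub>R Y) - (l / (1 - l)) *\<^sub>R X = Y"
proof -
  have "1 - l \<noteq> 0" using assms by simp
  then show ?thesis by (simp add: scaleR_add_right scaleR_scaleR)
qed

theorem proposition1:
  fixes g :: "real^'r \<Rightarrow> real^'l"
    and m :: "real^'s \<Rightarrow> real^'l"
    and \<A> :: "(real^'s) set"
    and \<Theta> :: "(real^'d) set"
    and P1 :: "real^'d \<Rightarrow> (real^'r) measure"
    and PT :: "(real^'r) set \<Rightarrow> real"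
    and lams :: real and \<theta>s :: "real^'d" and \<alpha>s :: "real^'s" and P0s :: "(real^'r) set \<Rightarrow> real"
    and lam lam' :: real and \<theta> \<theta>' :: "real^'d" and \<alpha> \<alpha>' :: "real^'s"
    and P0 P0' :: "(real^'r) set \<Rightarrow> real"
  assumes P1_prob: "\<And>t. t \<in> \<Theta> \<Longrightarrow> prob_space (P1 t) \<and> sets (P1 t) = sets borel"
    and g_int: "\<And>t. t \<in> \<Theta> \<Longrightarrow> integrable (P1 t) g"
    and true_params: "lams \<in> {0<..<1}" "\<theta>s \<in> \<Theta>" "\<alpha>s \<in> \<A>" "P0s \<in> Mset g m \<alpha>s"
    and PT_def: "PT = mixture lams (P1 \<theta>s) P0s"
    and unique: "\<And>l t a. l \<in> {0<..<1} \<Longrightarrow> t \<in> \<Theta> \<Longrightarrow> a \<in> \<A> \<Longrightarrow>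
        ((1 / (1 - l)) *\<^sub>R signed_integral PT g - (l / (1 - l)) *\<^sub>R integral\<^sup>L (P1 t) g = m a
         \<longleftrightarrow> (l, t, a) = (lams, \<theta>s, \<alpha>s))"
    and rep1: "lam \<in> {0<..<1}" "\<theta> \<in> \<Theta>" "\<alpha> \<in> \<A>" "P0 \<in> Mset g m \<alpha>" "PT = mixture lam (P1 \<theta>) P0"
    and rep2: "lam' \<in> {0<..<1}" "\<theta>' \<in> \<Theta>" "\<alpha>' \<in> \<A>" "P0' \<in> Mset g m \<alpha>'" "PT = mixture lam' (P1 \<theta>') P0'"
  shows "lam = lam' \<and> \<theta> = \<theta>' \<and> P0 = P0'"
proof -
  have key: "l = lams \<and> t = \<theta>s"
    if H: "l \<in> {0<..<1}" "t \<in> \<Theta>" "a \<in> \<A>" "Q \<in> Mset g m a" "PT = mixture l (P1 t) Q" for l t a Q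
  proof -
    have "signed_integral PT g = l *\<^sub>R integral\<^sup>L (P1 t) g + (1 - l) *\<^sub>R m a"
      unfolding H(5) using P1_prob[OF H(2)] g_int[OF H(2)] H(1) H(4)
      by (intro mixture_signed_integral) auto
    then have "(1 / (1 - l)) *\<^sub>R signed_integral PT g - (l / (1 - l)) *\<^sub>R integral\<^sup>L (P1 t) g = m a"
      using H(1) by (simp add: alg_identity)
    then have "(l, t, a) = (lams, \<theta>s, \<alpha>s)" using unique[OF H(1-3)] by blast
    then show ?thesis by simp
  qed
  have e1: "lam = lams \<and> \<theta> = \<theta>s" by (rule key[OF rep1])
  have e2: "lam' = lams \<and> \<theta>' = \<theta>s" by (rule key[OF rep2])
  have ll: "lam = lam'" "\<theta> = \<theta>'" using e1 e2 by simp_all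
  have "P0 = P0'"
  proof
    fix X
    have "mixture lam (P1 \<theta>) P0 X = mixture lam (P1 \<theta>) P0' X"
      using rep1(5) rep2(5) ll by simp
    then have "(1 - lam) * P0 X = (1 - lam) * P0' X" unfolding mixture_def by simp
    moreover have "1 - lam \<noteq> 0" using rep1(1) by simp
    ultimately show "P0 X = P0' X" by simp
  qed
  then show ?thesis using ll by simp
qed

end
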